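(* Let $\Gamma_1,\Gamma_2$ be finite abelian groups with $|\Gamma_1|=2a+1$ and $|\Gamma_2|=2b+1$. Suppose that $2a+1$ divides $2b+1$ and that there exists a $\mathrm{M}^0_{\Gamma_2^*}(2,b;b,2)$. Then there exists a $\mathrm{M}^0_{\Gamma^*}(2,a+b+2ab;\,a+b+2ab,2)$, where $\Gamma=\Gamma_1\oplus\Gamma_2$.
   Context: For an abelian group $\Gamma$ and $\Omega\subseteq\Gamma$, a zero-sum magic partially filled array $\mathrm{M}^0_\Omega(m,n;s,k)$ is an $m\times n$ array, some cells of which may be empty, with entries in $\Omega$ in which every element of $\Omega$ appears exactly once, each row has exactly $s$ and each column exactly $k$ filled cells, and all row and column sums equal $0_\Gamma$. In particular $\mathrm{M}^0_\Omega(2,n;n,2)$ is a $2\times n$ array with no empty cells. $\Gamma^*=\Gamma\setminus\{0_\Gamma\}$. *)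

theory Defs
  imports Main "HOL-Library.Product_Plus"
begin

text \<open>A partially filled m x n array over an abelian group is modelled as a map
  A :: nat => nat => 'a option, rows indexed by i < m, columns by j < n;
  None = empty cell.\<close>

definition filled_cells :: "nat \<Rightarrow> nat \<Rightarrow> (nat \<Rightarrow> nat \<Rightarrow> 'a option) \<Rightarrow> (nat \<times> nat) set" where
  "filled_cells m n A = {(i, j). i < m \<and> j < n \<and> A i j \<noteq> None}"

definition row_cells :: "nat \<Rightarrow> (nat \<Rightarrow> nat \<Rightarrow> 'a option) \<Rightarrow> nat \<Rightarrow> nat set" where
  "row_cells n A i = {j. j < n \<and> A i j \<noteq> None}"

definition col_cells :: "nat \<Rightarrow> (nat \<Rightarrow> nat \<Rightarrow> 'a option) \<Rightarrow> nat \<Rightarrow> nat set" where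
  "col_cells m A j = {i. i < m \<and> A i j \<noteq> None}"

definition zero_sum_magic_pfa ::
  "'a::ab_group_add set \<Rightarrow> nat \<Rightarrow> nat \<Rightarrow> nat \<Rightarrow> nat \<Rightarrow> (nat \<Rightarrow> nat \<Rightarrow> 'a option) \<Rightarrow> bool" where
  "zero_sum_magic_pfa \<Omega> m n s k A \<longleftrightarrow>
     (\<forall>i j. (m \<le> i \<or> n \<le> j) \<longrightarrow> A i j = None)
   \<and> bij_betw (\<lambda>(i, j). the (A i j)) (filled_cells m n A) \<Omega>
   \<and> (\<forall>i<m. card (row_cells n A i) = s)
   \<and> (\<forall>j<n. card (col_cells m A j) = k)
   \<and> (\<forall>i<m. (\<Sum>j\<in>row_cells n A i. the (A i j)) = 0)
   \<and> (\<forall>j<n. (\<Sum>i\<in>col_cells m A j. the (A i j)) = 0)"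

end

theory Submission imports Defs begin

definition nsum :: "nat \<Rightarrow> 'a::ab_group_add \<Rightarrow> 'a" where
  "nsum k x = (\<Sum>i<k. x)"

lemma nsum_0[simp]: "nsum 0 x = 0" by (simp add: nsum_def)
lemma nsum_Suc: "nsum (Suc k) x = nsum k x + x" by (simp add: nsum_def)
lemma nsum_zero[simp]: "nsum k 0 = 0" by (simp add: nsum_def)
lemma nsum_add: "nsum k (x + y) = nsum k x + nsum k y" by (simp add: nsum_def sum.distrib)
lemma nsum_plus: "nsum (m + k) x = nsum m x + nsum k x"
  by (induction k) (simp_all add: nsum_Suc add.assoc)
lemma nsum_mult: "nsum (m * k) x = nsum m (nsum k x)"
  by (induction m) (simp_all add: nsum_plus nsum_Suc nsum_add add.commute)
lemma sum_const_nsum: "finite B \<Longrightarrow> (\<Sum>h\<in>B. x) = nsum (card B) x"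
  by (induction B rule: finite_induct) (simp_all add: nsum_Suc add.commute)

lemma lagrange: "nsum (card (UNIV::'a::{ab_group_add,finite} set)) (x::'a) = 0"
proof -
  have b: "bij ((+) x)" unfolding bij_def by (auto intro: inj_onI surjI[where f="\<lambda>y. y - x"])
  have "(\<Sum>g\<in>UNIV. g) = (\<Sum>g\<in>UNIV. x + g)"
    using sum.reindex_bij_betw[OF b, of id] by simp
  also have "\<dots> = (\<Sum>g\<in>(UNIV::'a set). x) + (\<Sum>g\<in>UNIV. g)" by (simp add: sum.distrib)
  finally show ?thesis by (simp add: sum_const_nsum)
qed

lemma odd_inv: 
  assumes "card (UNIV::'a::{ab_group_add,finite} set) = 2*b+1" and "(x::'a) + x = 0"
  shows "x = 0"
proof -
  have "nsum (2*b+1) x = 0" using lagrange[of x] assms(1) by simp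
  moreover have "nsum (2*b) x = 0" 
    using nsum_mult[of b 2 x] assms(2) by (simp add: mult.commute numeral_2_eq_2 nsum_Suc)
  ultimately show ?thesis by (simp add: nsum_Suc)
qed

lemma sum_univ_zero:
  assumes "card (UNIV::'a::{ab_group_add,finite} set) = 2*b+1"
  shows "(\<Sum>g\<in>(UNIV::'a set). g) = 0"
proof -
  have b: "bij (uminus::'a\<Rightarrow>'a)" by (rule bij_uminus)
  have "(\<Sum>g\<in>(UNIV::'a set). g) = (\<Sum>g\<in>UNIV. - g)"
    using sum.reindex_bij_betw[OF b, of id] by simp
  then have "(\<Sum>g\<in>(UNIV::'a set). g) = - (\<Sum>g\<in>(UNIV::'a set). g)" by (simp add: sum_negf)
  then have "(\<Sum>g\<in>(UNIV::'a set). g) + (\<Sum>g\<in>(UNIV::'a set). g) = 0" by (metis add.right_inverse)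
  then show ?thesis by (rule odd_inv[OF assms])
qed

lemma build:
  fixes R :: "'a::ab_group_add set"
  assumes fin: "finite R" and dis: "R \<inter> uminus ` R = {}" and un: "R \<union> uminus ` R = \<Omega>"
    and sm: "(\<Sum>x\<in>R. x) = 0"
  shows "\<exists>A. zero_sum_magic_pfa \<Omega> 2 (card R) (card R) 2 A"
proof -
  define n where "n = card R"
  obtain f where f: "bij_betw f {..<n} R"
    using ex_bij_betw_nat_finite[OF fin] by (auto simp: n_def atLeast0LessThan)
  have finj: "inj_on f {..<n}" and fim: "f ` {..<n} = R" using f by (auto simp: bij_betw_def)
  have fne: "f j \<noteq> - f k" if "j < n" "k < n" for j k
  proof
    assume "f j = - f k"
    moreover have "f j \<in> R" "f k \<in> R" using fim that by auto
    ultimately have "f j \<in> R \<inter> uminus ` R" by auto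
    then show False using dis by simp
  qed
  define A where "A = (\<lambda>i j. if j < n \<and> i = (0::nat) then Some (f j)
       else if j < n \<and> i = 1 then Some (- f j) else None)"
  have fc: "filled_cells 2 n A = {0,1} \<times> {..<n}"
    by (auto simp: filled_cells_def A_def)
  have rc: "row_cells n A i = {..<n}" if "i < 2" for i
    using that by (auto simp: row_cells_def A_def)
  have cc: "col_cells 2 A j = {0,1}" if "j < n" for j
    using that by (auto simp: col_cells_def A_def)
  have img: "(\<lambda>(i, j). the (A i j)) ` ({0,1} \<times> {..<n}) = \<Omega>"
  proof -
    have "(\<lambda>(i, j). the (A i j)) ` ({0,1} \<times> {..<n}) = f ` {..<n} \<union> uminus ` f ` {..<n}"
      by (auto simp: A_def image_iff)
    then show ?thesis using fim un by simp
  qed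
  have inj: "inj_on (\<lambda>(i, j). the (A i j)) ({0,1} \<times> {..<n})"
  proof -
    have a1: "\<forall>j<n. \<forall>k<n. f j \<noteq> - f k" using fne by blast
    have a2: "\<forall>j<n. \<forall>k<n. f j = f k \<longrightarrow> j = k" using finj by (auto dest: inj_onD)
    show ?thesis unfolding inj_on_def using a1 a2 by (auto simp: A_def) (metis)
  qed
  have "zero_sum_magic_pfa \<Omega> 2 n n 2 A"
    unfolding zero_sum_magic_pfa_def
  proof (intro conjI allI impI)
    show "A i j = None" if "2 \<le> i \<or> n \<le> j" for i j using that by (auto simp: A_def)
    show "bij_betw (\<lambda>(i, j). the (A i j)) (filled_cells 2 n A) \<Omega>"
      using inj img fc by (simp add: bij_betw_def)
    show "card (row_cells n A i) = n" if "i < 2" for i using rc[OF that] by simp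
    show "card (col_cells 2 A j) = 2" if "j < n" for j using cc[OF that] by simp
    show "(\<Sum>j\<in>row_cells n A i. the (A i j)) = 0" if "i < 2" for i
    proof -
      have s0: "(\<Sum>j<n. f j) = 0" using sm sum.reindex[OF finj, of id] fim by simp
      have "i = 0 \<or> i = 1" using that by auto
      then show ?thesis
      proof
        assume "i = 0" then show ?thesis using rc[OF that] s0 by (simp add: A_def)
      next
        assume "i = 1" then show ?thesis using rc[OF that] s0 by (simp add: A_def sum_negf)
      qed
    qed
    show "(\<Sum>i\<in>col_cells 2 A j. the (A i j)) = 0" if "j < n" for j
      using cc[OF that] that by (simp add: A_def)
  qed
  then show ?thesis unfolding n_def by blast
qed


lemma extract_reps:
  fixes A :: "nat \<Rightarrow> nat \<Rightarrow> 'a::ab_group_add option"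
  assumes z: "zero_sum_magic_pfa \<Omega> 2 n n 2 A"
  shows "\<exists>R. finite R \<and> R \<inter> uminus ` R = {} \<and> R \<union> uminus ` R = \<Omega> \<and> (\<Sum>x\<in>R. x) = 0"
proof -
  have out: "\<And>i j. (2 \<le> i \<or> n \<le> j) \<Longrightarrow> A i j = None"
    and bij: "bij_betw (\<lambda>(i, j). the (A i j)) (filled_cells 2 n A) \<Omega>"
    and rcard: "\<And>i. i < 2 \<Longrightarrow> card (row_cells n A i) = n"
    and rsum: "\<And>i. i < 2 \<Longrightarrow> (\<Sum>j\<in>row_cells n A i. the (A i j)) = 0"
    and csum: "\<And>j. j < n \<Longrightarrow> (\<Sum>i\<in>col_cells 2 A j. the (A i j)) = 0"
    using z unfolding zero_sum_magic_pfa_def by blast+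
  have rc: "row_cells n A i = {..<n}" if "i < 2" for i
  proof -
    have "row_cells n A i \<subseteq> {..<n}" by (auto simp: row_cells_def)
    then show ?thesis using rcard[OF that] by (intro card_subset_eq) auto
  qed
  have filled: "A i j \<noteq> None" if "i < 2" "j < n" for i j
    using rc[OF that(1)] that(2) by (auto simp: row_cells_def)
  have fc: "filled_cells 2 n A = {0,1} \<times> {..<n}"
    using filled by (auto simp: filled_cells_def)
  define f where "f j = the (A 0 j)" for j
  have cc: "col_cells 2 A j = {0,1}" if "j < n" for j
    using filled that by (auto simp: col_cells_def)
  have g: "the (A 1 j) = - f j" if "j < n" for j
    using csum[OF that] cc[OF that] by (simp add: f_def eq_neg_iff_add_eq_0 add.commute)
  have inj: "inj_on (\<lambda>(i, j). the (A i j)) ({0,1} \<times> {..<n})" and img: "(\<lambda>(i, j). the (A i j)) ` ({0,1} \<times> {..<n}) = \<Omega>"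
    using bij fc by (auto simp: bij_betw_def)
  have finj: "inj_on f {..<n}"
    by (rule inj_onI) (use inj in \<open>auto simp: f_def inj_on_def\<close>)
  have fne: "f j \<noteq> - f k" if "j < n" "k < n" for j k
  proof
    assume "f j = - f k"
    then have "(\<lambda>(i, j). the (A i j)) (0, j) = (\<lambda>(i, j). the (A i j)) (1, k)"
      using g[OF that(2)] by (simp add: f_def)
    then show False using inj_onD[OF inj _ _ ] that by fastforce
  qed
  define R where "R = f ` {..<n}"
  have "finite R" by (simp add: R_def)
  moreover have "R \<inter> uminus ` R = {}" using fne by (auto simp: R_def)
  moreover have "R \<union> uminus ` R = \<Omega>"
  proof -
    have "(\<lambda>(i, j). the (A i j)) ` ({0,1} \<times> {..<n}) = f ` {..<n} \<union> uminus ` f ` {..<n}"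
      using g by (force simp: f_def image_iff)
    then show ?thesis using img by (simp add: R_def)
  qed
  moreover have "(\<Sum>x\<in>R. x) = 0"
    using sum.reindex[OF finj, of id] rsum[of 0] rc[of 0] by (simp add: R_def f_def)
  ultimately show ?thesis by blast
qed


theorem mainTheorem16:
  fixes a b :: nat
  assumes "card (UNIV :: 'g1::{ab_group_add, finite} set) = 2 * a + 1"
    and "card (UNIV :: 'g2::{ab_group_add, finite} set) = 2 * b + 1"
    and "(2 * a + 1) dvd (2 * b + 1)"
    and "\<exists>A :: nat \<Rightarrow> nat \<Rightarrow> 'g2 option.
           zero_sum_magic_pfa (UNIV - {0}) 2 b b 2 A"
  shows "\<exists>A :: nat \<Rightarrow> nat \<Rightarrow> ('g1 \<times> 'g2) option.
           zero_sum_magic_pfa (UNIV - {0}) 2 (a + b + 2 * a * b) (a + b + 2 * a * b) 2 A"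
proof -
  obtain A0 :: "nat \<Rightarrow> nat \<Rightarrow> 'g2 option" where A0: "zero_sum_magic_pfa (UNIV - {0}) 2 b b 2 A0"
    using assms(4) by blast
  obtain R :: "'g2 set" where R: "R \<inter> uminus ` R = {}" "R \<union> uminus ` R = UNIV - {0}"
    "(\<Sum>x\<in>R. x) = 0"
    using extract_reps[OF A0] by blast
  have R0: "0 \<notin> R" using R(2) by auto
  obtain h :: "'g1 \<Rightarrow> nat" where h: "bij_betw h UNIV {0..<card (UNIV::'g1 set)}"
    using ex_bij_betw_finite_nat[of "UNIV::'g1 set"] by (meson finite)
  have hinj: "h x = h y \<Longrightarrow> x = y" for x y using bij_betw_imp_inj_on[OF h] by (simp add: inj_on_def)
  have nz1: "x \<noteq> - x" if "x \<noteq> 0" for x :: 'g1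
  proof
    assume "x = - x"
    then have "x + x = x + - x" by (rule arg_cong)
    then have "x + x = 0" by simp
    then show False using odd_inv[OF assms(1)] that by blast
  qed
  define R1 where "R1 = {x::'g1. x \<noteq> 0 \<and> h x < h (- x)}"
  define R' where "R' = (\<lambda>t. (0::'g1, t)) ` R \<union> R1 \<times> (UNIV::'g2 set)"
  obtain k where k: "2 * b + 1 = k * (2 * a + 1)" using assms(3) by (metis dvd_def mult.commute)
  have kill: "(\<Sum>y\<in>(UNIV::'g2 set). g) = 0" for g :: 'g1
  proof -
    have "(\<Sum>y\<in>(UNIV::'g2 set). g) = nsum (k * (2 * a + 1)) g"
      using sum_const_nsum[of "UNIV::'g2 set" g] assms(2) k by simp
    also have "\<dots> = 0" using nsum_mult[of k "2*a+1" g] lagrange[of g] assms(1) by simp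
    finally show ?thesis .
  qed
  have dis1: "(\<lambda>t. (0::'g1, t)) ` R \<inter> R1 \<times> (UNIV::'g2 set) = {}" by (auto simp: R1_def)
  have s1: "(\<Sum>x\<in>(\<lambda>t. (0::'g1, t)) ` R. x) = 0"
  proof -
    have "(\<Sum>x\<in>(\<lambda>t. (0::'g1, t)) ` R. x) = (\<Sum>t\<in>R. (0::'g1, t))"
      by (subst sum.reindex) (auto intro: inj_onI)
    also have "\<dots> = 0" using R(3) by (simp add: sum_prod zero_prod_def)
    finally show ?thesis .
  qed
  have s2: "(\<Sum>x\<in>R1 \<times> (UNIV::'g2 set). x) = 0"
  proof -
    have "(\<Sum>x\<in>R1 \<times> (UNIV::'g2 set). x) = (\<Sum>g\<in>R1. \<Sum>y\<in>(UNIV::'g2 set). (g, y))"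
      by (simp add: sum.cartesian_product)
    also have "\<dots> = 0" using kill sum_univ_zero[OF assms(2)] by (simp add: sum_prod zero_prod_def)
    finally show ?thesis .
  qed
  have sR: "(\<Sum>x\<in>R'. x) = 0" unfolding R'_def
    by (subst sum.union_disjoint) (use dis1 s1 s2 in auto)
  have dR: "R' \<inter> uminus ` R' = {}"
  proof (rule ccontr)
    assume "R' \<inter> uminus ` R' \<noteq> {}"
    then obtain p q where pq: "p \<in> R'" "q \<in> R'" "p = - q" by blast
    obtain g y where p: "p = (g, y)" by fastforce
    show False
    proof (cases "g = 0")
      case True
      then have "y \<in> R" "- y \<in> R" using pq p by (auto simp: R'_def R1_def)
      then show ?thesis using R(1) by (metis IntI empty_iff image_eqI minus_minus)
    next
      case False
      then have "g \<in> R1" "- g \<in> R1" using pq p by (auto simp: R'_def)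
      then show ?thesis by (auto simp: R1_def)
    qed
  qed
  have uR: "R' \<union> uminus ` R' = UNIV - {0}"
  proof (intro equalityI subsetI)
    fix p assume "p \<in> R' \<union> uminus ` R'"
    then show "p \<in> UNIV - {0}" using R0 by (auto simp: R'_def R1_def zero_prod_def)
  next
    fix p :: "'g1 \<times> 'g2" assume p0: "p \<in> UNIV - {0}"
    obtain g y where p: "p = (g, y)" by fastforce
    show "p \<in> R' \<union> uminus ` R'"
    proof (cases "g = 0")
      case True
      then have "y \<noteq> 0" using p0 p by (auto simp: zero_prod_def)
      then have "y \<in> R \<or> y \<in> uminus ` R" using R(2) by blast
      then show ?thesis
      proof
        assume "y \<in> R" then have "p \<in> R'" using True p by (simp add: R'_def)
        then show ?thesis by blast
      next
        assume "y \<in> uminus ` R" then obtain x where "x \<in> R" "y = - x" by blast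
        then have "(0, x) \<in> R'" "p = - (0, x)" using True p by (auto simp: R'_def)
        then show ?thesis by blast
      qed
    next
      case False
      have "h g \<noteq> h (- g)" using nz1[OF False] hinj by blast
      then have "g \<in> R1 \<or> - g \<in> R1" using False by (auto simp: R1_def)
      then show ?thesis
      proof
        assume "g \<in> R1" then have "p \<in> R'" using p by (simp add: R'_def)
        then show ?thesis by blast
      next
        assume "- g \<in> R1"
        then have "(- g, - y) \<in> R'" "p = - (- g, - y)" using p by (auto simp: R'_def)
        then show ?thesis by blast
      qed
    qed
  qed
  have "finite R'" by simp
  obtain A :: "nat \<Rightarrow> nat \<Rightarrow> ('g1 \<times> 'g2) option" where A: "zero_sum_magic_pfa (UNIV - {0}) 2 (card R') (card R') 2 A"
    using build[OF \<open>finite R'\<close> dR uR sR] by blast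
  have cU: "card (UNIV :: ('g1 \<times> 'g2) set) = (2*a+1) * (2*b+1)"
    by (metis UNIV_Times_UNIV card_cartesian_product assms(1,2))
  have "card (UNIV - {0::'g1 \<times> 'g2}) = card R' + card (uminus ` R')"
    using uR dR by (metis card_Un_disjoint finite finite_imageI)
  also have "card (uminus ` R') = card R'" by (simp add: card_image)
  finally have "2 * card R' = (2*a+1) * (2*b+1) - 1" using cU by simp
  then have "card R' = a + b + 2 * a * b" by (simp add: algebra_simps)
  then show ?thesis using A by metis
qed

end
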